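(* Let $n$ be odd and let $S$ be a semiregular subgroup of $G^*$. Then there exists $\varphi\in G^*\setminus G$ of order $2$ such that $\varphi s=s\varphi$ for every $s\in S$.
   Context: Fix $n\ge 2$, $W=\{1,\dots,n\}$, $M=\{n+1,\dots,2n\}$, $I=W\cup M$. $G^*=\{\varphi\in\mathrm{Sym}(I):\{\varphi(W),\varphi(M)\}=\{W,M\}\}$ and $G=\{\varphi\in\mathrm{Sym}(I):\varphi(W)=W,\ \varphi(M)=M\}$. A subgroup $S\le\mathrm{Sym}(I)$ is semiregular if for every $z\in I$ the only element $s\in S$ with $s(z)=z$ is the identity. *)

theory Defs
  imports "HOL-Algebra.Sym_Groups" "HOL-Algebra.Multiplicative_Group"
begin

definition Wset :: "nat \<Rightarrow> nat set" where "Wset n = {1..n}"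
definition Mset :: "nat \<Rightarrow> nat set" where "Mset n = {n+1..2*n}"
definition Iset :: "nat \<Rightarrow> nat set" where "Iset n = {1..2*n}"

definition Gstar :: "nat \<Rightarrow> (nat \<Rightarrow> nat) set" where
  "Gstar n = {\<phi>. \<phi> permutes Iset n \<and> {\<phi> ` Wset n, \<phi> ` Mset n} = {Wset n, Mset n}}"

definition Gfix :: "nat \<Rightarrow> (nat \<Rightarrow> nat) set" where
  "Gfix n = {\<phi>. \<phi> permutes Iset n \<and> \<phi> ` Wset n = Wset n \<and> \<phi> ` Mset n = Mset n}"

definition semiregular :: "nat \<Rightarrow> (nat \<Rightarrow> nat) set \<Rightarrow> bool" where
  "semiregular n S \<longleftrightarrow> (\<forall>z \<in> Iset n. \<forall>s \<in> S. s z = z \<longrightarrow> s = id)"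

end

theory Submission
  imports Defs
begin

definition orbit_of :: "('a \<Rightarrow> 'a) set \<Rightarrow> 'a \<Rightarrow> 'a set" where
  "orbit_of S y = (\<lambda>s. s y) ` S"

definition pick :: "'a set \<Rightarrow> 'a" where "pick Q = (SOME z. z \<in> Q)"

lemma invol_fix:
  assumes "finite A" "\<forall>x\<in>A. f x \<in> A" "\<forall>x\<in>A. f (f x) = x" "odd (card A)"
  shows "\<exists>x\<in>A. f x = x"
  using assms
proof (induction "card A" arbitrary: A rule: less_induct)
  case less
  then have "A \<noteq> {}" by auto
  then obtain x where x: "x \<in> A" by auto
  show ?case
  proof (cases "f x = x")
    case True then show ?thesis using x by blast
  next
    case False
    define A' where "A' = A - {x, f x}"
    have fx: "f x \<in> A" using less x by auto
    have c: "card A' = card A - 2" unfolding A'_def using less.prems(1) x fx False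
      by (simp add: card_Diff_subset)
    have c2: "card A \<ge> 2"
    proof -
      have "{x, f x} \<subseteq> A" using x fx by auto
      then have "card {x, f x} \<le> card A" using less.prems(1) card_mono by blast
      then show ?thesis using False by simp
    qed
    have "\<forall>y\<in>A'. f y \<in> A'"
    proof
      fix y assume y: "y \<in> A'"
      then have yA: "y \<in> A" "y \<noteq> x" "y \<noteq> f x" unfolding A'_def by auto
      have "f y \<noteq> x" using yA less.prems(3) by metis
      moreover have "f y \<noteq> f x" using yA less.prems(3) x by metis
      ultimately show "f y \<in> A'" unfolding A'_def using yA less.prems(2) by auto
    qed
    moreover have "odd (card A')" using c c2 less.prems(4) by auto
    moreover have "card A' < card A" using c c2 by simp
    moreover have "finite A'" unfolding A'_def using less.prems(1) by simp
    moreover have "\<forall>y\<in>A'. f (f y) = y" unfolding A'_def using less.prems(3) by auto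
    ultimately obtain y where "y \<in> A'" "f y = y" using less.hyps by blast
    then show ?thesis unfolding A'_def by auto
  qed
qed

locale sgrp =
  fixes S :: "('a \<Rightarrow> 'a) set" and I :: "'a set"
  assumes finS: "finite S" and finI: "finite I"
  and idS: "id \<in> S"
  and compS: "\<And>a b. a \<in> S \<Longrightarrow> b \<in> S \<Longrightarrow> a \<circ> b \<in> S"
  and invS: "\<And>a. a \<in> S \<Longrightarrow> \<exists>b\<in>S. b \<circ> a = id \<and> a \<circ> b = id"
  and mapsI: "\<And>a x. a \<in> S \<Longrightarrow> x \<in> I \<Longrightarrow> a x \<in> I"
  and semireg: "\<And>a x. a \<in> S \<Longrightarrow> x \<in> I \<Longrightarrow> a x = x \<Longrightarrow> a = id"
begin

lemma uniq:
  assumes "a \<in> S" "b \<in> S" "x \<in> I" "a x = b x" shows "a = b"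
proof -
  obtain b' where b': "b' \<in> S" "b' \<circ> b = id" "b \<circ> b' = id" using invS assms(2) by blast
  have "(b' \<circ> a) x = x" using assms(4) fun_cong[OF b'(2), of x] by simp
  then have "b' \<circ> a = id" using semireg[OF compS[OF b'(1) assms(1)] assms(3)] by simp
  then have "b \<circ> (b' \<circ> a) = b" by simp
  then show ?thesis using b'(3) by (simp add: comp_assoc[symmetric])
qed

lemma orb_sub: "y \<in> I \<Longrightarrow> orbit_of S y \<subseteq> I"
  unfolding orbit_of_def using mapsI by auto

lemma self_orb: "y \<in> orbit_of S y"
  unfolding orbit_of_def using image_eqI[of y "\<lambda>s. s y" id S] idS by simp

lemma card_orb: "x \<in> I \<Longrightarrow> card (orbit_of S x) = card S"
proof -
  assume x: "x \<in> I"
  have "inj_on (\<lambda>s. s x) S"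
  proof (rule inj_onI)
    fix a b assume "a \<in> S" "b \<in> S" "a x = b x"
    then show "a = b" using uniq[of a b x] x by simp
  qed
  then show ?thesis unfolding orbit_of_def by (rule card_image)
qed

lemma orb_eq:
  assumes "x \<in> I" "z \<in> orbit_of S x" shows "orbit_of S z = orbit_of S x"
proof -
  obtain a where a: "a \<in> S" "z = a x" using assms(2) unfolding orbit_of_def by auto
  obtain a' where a': "a' \<in> S" "a' \<circ> a = id" using invS a(1) by blast
  show ?thesis
  proof
    show "orbit_of S z \<subseteq> orbit_of S x"
    proof
      fix w assume "w \<in> orbit_of S z"
      then obtain s where s: "s \<in> S" "w = s z" unfolding orbit_of_def by auto
      then have "w = (s \<circ> a) x" using a(2) by simp
      then show "w \<in> orbit_of S x" unfolding orbit_of_def using compS[OF s(1) a(1)] by blast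
    qed
    show "orbit_of S x \<subseteq> orbit_of S z"
    proof
      fix w assume "w \<in> orbit_of S x"
      then obtain s where s: "s \<in> S" "w = s x" unfolding orbit_of_def by auto
      have "w = (s \<circ> a') z" using a(2) s(2) fun_cong[OF a'(2), of x] by simp
      then show "w \<in> orbit_of S z" unfolding orbit_of_def using compS s a' by blast
    qed
  qed
qed

lemma orb_disj:
  assumes "x \<in> I" "y \<in> I" "orbit_of S x \<noteq> orbit_of S y"
  shows "orbit_of S x \<inter> orbit_of S y = {}"
proof (rule ccontr)
  assume "orbit_of S x \<inter> orbit_of S y \<noteq> {}"
  then obtain z where z: "z \<in> orbit_of S x" "z \<in> orbit_of S y" by blast
  show False using orb_eq[OF assms(1) z(1)] orb_eq[OF assms(2) z(2)] assms(3) by simp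
qed

lemma count:
  assumes "X \<subseteq> I" "\<forall>x\<in>X. orbit_of S x \<subseteq> X"
  shows "card S * card (orbit_of S ` X) = card X"
proof -
  have U: "\<Union>(orbit_of S ` X) = X"
  proof
    show "\<Union>(orbit_of S ` X) \<subseteq> X" using assms(2) by blast
    show "X \<subseteq> \<Union>(orbit_of S ` X)" using self_orb by blast
  qed
  have fX: "finite X" using assms(1) finI finite_subset by blast
  have "card S * card (orbit_of S ` X) = card (\<Union>(orbit_of S ` X))"
  proof (rule card_partition)
    show "finite (orbit_of S ` X)" using fX by simp
    show "finite (\<Union>(orbit_of S ` X))" using fX U by simp
    fix c assume "c \<in> orbit_of S ` X"
    then obtain x where "x \<in> X" "c = orbit_of S x" by blast
    then show "card c = card S" using card_orb[of x] assms(1) by auto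
  next
    fix c1 c2 assume "c1 \<in> orbit_of S ` X" "c2 \<in> orbit_of S ` X" "c1 \<noteq> c2"
    then obtain x1 x2 where "x1 \<in> X" "c1 = orbit_of S x1" "x2 \<in> X" "c2 = orbit_of S x2" by blast
    then show "c1 \<inter> c2 = {}" using orb_disj[of x1 x2] assms(1) \<open>c1 \<noteq> c2\<close> by auto
  qed
  then show ?thesis using U by simp
qed

definition rp where "rp y = pick (orbit_of S y)"

lemma pick_in: "Q \<noteq> {} \<Longrightarrow> pick Q \<in> Q"
  unfolding pick_def by (simp add: some_in_eq)

lemma rp_orb: "rp y \<in> orbit_of S y"
  unfolding rp_def using pick_in[of "orbit_of S y"] self_orb[of y] by blast

lemma rp_I: "y \<in> I \<Longrightarrow> rp y \<in> I"
  using rp_orb[of y] orb_sub[of y] by blast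

lemma orb_rp: "y \<in> I \<Longrightarrow> orbit_of S (rp y) = orbit_of S y"
  using orb_eq[of y "rp y"] rp_orb[of y] by blast

lemma rp_rp: "y \<in> I \<Longrightarrow> rp (rp y) = rp y"
proof -
  assume "y \<in> I"
  then have "orbit_of S (rp y) = orbit_of S y" by (rule orb_rp)
  then show ?thesis by (simp add: rp_def)
qed

lemma rp_act: "a \<in> S \<Longrightarrow> y \<in> I \<Longrightarrow> rp (a y) = rp y"
proof -
  assume a: "a \<in> S" and y: "y \<in> I"
  have "a y \<in> orbit_of S y" unfolding orbit_of_def using a by blast
  then have "orbit_of S (a y) = orbit_of S y" using orb_eq[of y "a y"] y by blast
  then show ?thesis by (simp add: rp_def)
qed

definition sg where "sg y = (THE s. s \<in> S \<and> s (rp y) = y)"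

lemma sg_ex: assumes "y \<in> I" shows "\<exists>s. s \<in> S \<and> s (rp y) = y"
proof -
  obtain a where a: "a \<in> S" "rp y = a y" using rp_orb[of y] unfolding orbit_of_def by auto
  obtain b where b: "b \<in> S" "b \<circ> a = id" using invS a(1) by blast
  have "b (rp y) = y" using a(2) fun_cong[OF b(2), of y] by simp
  then show ?thesis using b by blast
qed

lemma sg: assumes "y \<in> I" shows "sg y \<in> S \<and> sg y (rp y) = y"
proof -
  obtain s where s: "s \<in> S" "s (rp y) = y" using sg_ex[OF assms] by blast
  have "\<exists>!s. s \<in> S \<and> s (rp y) = y"
  proof (rule ex1I[of _ s])
    show "s \<in> S \<and> s (rp y) = y" using s by simp
    fix t assume t: "t \<in> S \<and> t (rp y) = y"
    show "t = s" using uniq[of t s "rp y"] s rp_I[OF assms] t by simp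
  qed
  then show ?thesis unfolding sg_def by (rule theI'[of "\<lambda>s. s \<in> S \<and> s (rp y) = y"])
qed

lemma sg_act: assumes "a \<in> S" "y \<in> I" shows "sg (a y) = a \<circ> sg y"
proof -
  have ay: "a y \<in> I" using mapsI assms by blast
  have "(a \<circ> sg y) (rp (a y)) = a y" using sg[OF assms(2)] rp_act[OF assms] by simp
  moreover have "a \<circ> sg y \<in> S" using compS assms sg by blast
  ultimately show ?thesis using uniq[of "sg (a y)" "a \<circ> sg y" "rp (a y)"] sg[OF ay] rp_I[OF ay] by auto
qed

lemma sg_rp: "y \<in> I \<Longrightarrow> sg (rp y) = id"
proof -
  assume y: "y \<in> I"
  have "sg (rp y) (rp y) = id (rp y)" using sg[OF rp_I[OF y]] rp_rp[OF y] by simp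
  then show ?thesis using uniq[of "sg (rp y)" id "rp y"] sg[OF rp_I[OF y]] rp_I[OF y] idS by auto
qed

definition phi where "phi g y = (if y \<in> I then sg y (g (rp y)) else y)"

lemma phi_comm: assumes "a \<in> S" "y \<in> I" shows "phi g (a y) = a (phi g y)"
proof -
  have ay: "a y \<in> I" using mapsI[OF assms] .
  have "phi g (a y) = sg (a y) (g (rp (a y)))" unfolding phi_def using ay by simp
  also have "\<dots> = (a \<circ> sg y) (g (rp y))" using sg_act[OF assms] rp_act[OF assms] by simp
  also have "\<dots> = a (phi g y)" unfolding phi_def using assms(2) by simp
  finally show ?thesis .
qed

lemma phi_rep: assumes "y \<in> I" shows "phi g (rp y) = g (rp y)"
  unfolding phi_def using rp_I[OF assms] rp_rp[OF assms] sg_rp[OF assms] by simp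

lemma phi_I: assumes "y \<in> I" "g (rp y) \<in> I" shows "phi g y \<in> I"
  unfolding phi_def using sg[OF assms(1)] mapsI[of "sg y" "g (rp y)"] assms by simp

lemma phi_invol:
  assumes "\<forall>y\<in>I. g (rp y) \<in> I" "\<forall>y\<in>I. phi g (g (rp y)) = rp y" "y \<in> I"
  shows "phi g (phi g y) = y"
proof -
  have gI: "g (rp y) \<in> I" using assms by blast
  have "phi g (phi g y) = phi g (sg y (g (rp y)))" unfolding phi_def using assms(3) by simp
  also have "\<dots> = sg y (phi g (g (rp y)))" using phi_comm[OF _ gI] sg[OF assms(3)] by simp
  also have "\<dots> = sg y (rp y)" using assms by simp
  also have "\<dots> = y" using sg[OF assms(3)] by simp
  finally show ?thesis .
qed

end

lemma WM_facts:
  assumes "n \<ge> 1"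
  shows "Wset n \<inter> Mset n = {}" "Wset n \<union> Mset n = Iset n" "Wset n \<noteq> Mset n"
    "Wset n \<subseteq> Iset n" "Mset n \<subseteq> Iset n" "card (Wset n) = n" "card (Mset n) = n" "1 \<in> Wset n"
proof -
  show "Wset n \<inter> Mset n = {}" unfolding Wset_def Mset_def by auto
  show "Wset n \<union> Mset n = Iset n"
  proof -
    have "{n+1..2*n} = {n<..2*n}" using atLeastSucAtMost_greaterThanAtMost[of n "2*n"] by simp
    moreover have "{1..n} \<union> {n<..2*n} = {1..2*n}" using ivl_disj_un_two(8)[of 1 n "2*n"] assms by simp
    ultimately show ?thesis unfolding Wset_def Mset_def Iset_def by simp
  qed
  show "1 \<in> Wset n" unfolding Wset_def using assms by simp
  show "Wset n \<noteq> Mset n" unfolding Wset_def Mset_def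
  proof
    assume "{1..n} = {n + 1..2 * n}"
    moreover have "1 \<in> {1..n}" using assms by simp
    ultimately have "1 \<in> {n+1..2*n}" by simp
    then show False using assms by simp
  qed
  show "Wset n \<subseteq> Iset n" unfolding Wset_def Iset_def by auto
  show "Mset n \<subseteq> Iset n" unfolding Mset_def Iset_def by auto
  show "card (Wset n) = n" unfolding Wset_def by simp
  show "card (Mset n) = n" unfolding Mset_def by simp
qed

lemma dich:
  assumes "a \<in> Gstar n"
  shows "(a ` Wset n = Wset n \<and> a ` Mset n = Mset n) \<or> (a ` Wset n = Mset n \<and> a ` Mset n = Wset n)"
  using assms unfolding Gstar_def by (simp add: doubleton_eq_iff)

lemma finish:
  fixes \<phi> :: "nat \<Rightarrow> nat" and S :: "(nat \<Rightarrow> nat) set"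
  assumes n1: "n \<ge> 1"
    and out: "\<forall>y. y \<notin> Iset n \<longrightarrow> \<phi> y = y"
    and inv: "\<forall>y\<in>Iset n. \<phi> (\<phi> y) = y"
    and WM: "\<forall>y\<in>Wset n. \<phi> y \<in> Mset n"
    and MW: "\<forall>y\<in>Mset n. \<phi> y \<in> Wset n"
    and comm: "\<forall>s\<in>S. \<forall>y\<in>Iset n. \<phi> (s y) = s (\<phi> y)"
    and perm: "\<forall>s\<in>S. s permutes Iset n"
  shows "\<exists>\<phi> \<in> Gstar n - Gfix n. group.ord (sym_group (2*n)) \<phi> = 2 \<and>
           (\<forall>s \<in> S. \<phi> \<circ> s = s \<circ> \<phi>)"
proof (rule bexI[of _ \<phi>], intro conjI ballI)
  note F = WM_facts[OF n1]
  have inv2: "\<phi> (\<phi> y) = y" for y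
    using inv out by (cases "y \<in> Iset n") auto
  have pm: "\<phi> permutes Iset n"
    unfolding permutes_def
  proof (intro conjI allI impI)
    fix x assume "x \<notin> Iset n" then show "\<phi> x = x" using out by blast
  next
    fix y show "\<exists>!x. \<phi> x = y"
    proof (rule ex1I[of _ "\<phi> y"])
      show "\<phi> (\<phi> y) = y" by (rule inv2)
      fix x assume "\<phi> x = y"
      then show "x = \<phi> y" using inv2[of x] by simp
    qed
  qed
  have imW: "\<phi> ` Wset n = Mset n"
  proof
    show "\<phi> ` Wset n \<subseteq> Mset n" using WM by blast
    show "Mset n \<subseteq> \<phi> ` Wset n"
    proof
      fix m assume m: "m \<in> Mset n"
      then have "\<phi> m \<in> Wset n" using MW by blast
      moreover have "m = \<phi> (\<phi> m)" using inv2 by simp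
      ultimately show "m \<in> \<phi> ` Wset n" by blast
    qed
  qed
  have imM: "\<phi> ` Mset n = Wset n"
  proof
    show "\<phi> ` Mset n \<subseteq> Wset n" using MW by blast
    show "Wset n \<subseteq> \<phi> ` Mset n"
    proof
      fix m assume m: "m \<in> Wset n"
      then have "\<phi> m \<in> Mset n" using WM by blast
      moreover have "m = \<phi> (\<phi> m)" using inv2 by simp
      ultimately show "m \<in> \<phi> ` Mset n" by blast
    qed
  qed
  show "\<phi> \<in> Gstar n - Gfix n"
  proof -
    have "{\<phi> ` Wset n, \<phi> ` Mset n} = {Wset n, Mset n}" unfolding imW imM by (rule insert_commute)
    then have "\<phi> \<in> Gstar n" unfolding Gstar_def using pm by simp
    moreover have "\<phi> \<notin> Gfix n" unfolding Gfix_def using imW F(3) by simp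
    ultimately show ?thesis by simp
  qed
  have car: "\<phi> \<in> carrier (sym_group (2*n))"
    using pm unfolding sym_group_carrier Iset_def by simp
  interpret G: group "sym_group (2*n)" by (rule sym_group_is_group)
  have ne: "\<phi> \<noteq> id"
  proof
    assume e: "\<phi> = id"
    have "\<phi> 1 \<in> Mset n" using bspec[OF WM F(8)] .
    then have "1 \<in> Mset n" using e by simp
    then have "1 \<in> Wset n \<inter> Mset n" using F(8) by simp
    then show False using F(1) by simp
  qed
  have sq: "\<phi> [^]\<^bsub>sym_group (2*n)\<^esub> (2::nat) = \<one>\<^bsub>sym_group (2*n)\<^esub>"
    using inv2 by (simp add: numeral_2_eq_2 sym_group_mult sym_group_one fun_eq_iff)
  have d: "G.ord \<phi> dvd 2" using G.pow_eq_id[OF car, of 2] sq by simp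
  have one: "\<one>\<^bsub>sym_group (2*n)\<^esub> = id" by (rule sym_group_one)
  have n1': "G.ord \<phi> \<noteq> 1" using G.ord_eq_1[OF car] ne unfolding one by simp
  have "G.ord \<phi> \<noteq> 0"
  proof
    assume "G.ord \<phi> = 0"
    with d show False by simp
  qed
  moreover have "G.ord \<phi> \<le> 2" using d by (simp add: dvd_imp_le)
  ultimately show "G.ord \<phi> = 2" using n1' by linarith
next
  fix s assume s: "s \<in> S"
  show "\<phi> \<circ> s = s \<circ> \<phi>"
  proof
    fix y show "(\<phi> \<circ> s) y = (s \<circ> \<phi>) y"
    proof (cases "y \<in> Iset n")
      case True then show ?thesis using bspec[OF bspec[OF comm s] True] by simp
    next
      case False
      have "s y = y" using permutes_not_in[OF bspec[OF perm s] False] by simp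
      then show ?thesis using out False by simp
    qed
  qed
qed


lemma subgroup_facts:
  fixes n :: nat and S :: "(nat \<Rightarrow> nat) set"
  assumes "subgroup S (sym_group (2*n))" "semiregular n S"
  shows "sgrp S (Iset n)" "\<forall>s\<in>S. s permutes Iset n"
proof -
  interpret G: group "sym_group (2*n)" by (rule sym_group_is_group)
  have I: "Iset n = {1..2*n}" unfolding Iset_def by simp
  have sub: "S \<subseteq> carrier (sym_group (2*n))" using subgroup.subset[OF assms(1)] .
  have pm: "\<forall>s\<in>S. s permutes Iset n"
  proof
    fix s assume "s \<in> S"
    then have "s \<in> carrier (sym_group (2*n))" using sub by blast
    then show "s permutes Iset n" unfolding sym_group_carrier I .
  qed
  show "\<forall>s\<in>S. s permutes Iset n" by (rule pm)
  show "sgrp S (Iset n)"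
  proof
    have "S \<subseteq> {p. p permutes {1..2*n}}" using sub unfolding sym_group_def by simp
    moreover have "finite {p. p permutes {1..2*n}}" by (rule finite_permutations) simp
    ultimately show "finite S" by (rule finite_subset)
    show "finite (Iset n)" unfolding I by simp
    have "\<one>\<^bsub>sym_group (2*n)\<^esub> \<in> S" using subgroup.one_closed[OF assms(1)] .
    then show "id \<in> S" by (simp add: sym_group_one)
    fix a b assume "a \<in> S" "b \<in> S"
    then have "a \<otimes>\<^bsub>sym_group (2*n)\<^esub> b \<in> S" using subgroup.m_closed[OF assms(1)] by blast
    then show "a \<circ> b \<in> S" by (simp add: sym_group_mult)
  next
    fix a assume a: "a \<in> S"
    have ac: "a \<in> carrier (sym_group (2*n))" using a sub by blast
    have "inv\<^bsub>sym_group (2*n)\<^esub> a \<in> S" using subgroup.m_inv_closed[OF assms(1) a] .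
    moreover have "inv\<^bsub>sym_group (2*n)\<^esub> a \<circ> a = id"
      using G.l_inv[OF ac] by (simp add: sym_group_mult sym_group_one)
    moreover have "a \<circ> inv\<^bsub>sym_group (2*n)\<^esub> a = id"
      using G.r_inv[OF ac] by (simp add: sym_group_mult sym_group_one)
    ultimately show "\<exists>b\<in>S. b \<circ> a = id \<and> a \<circ> b = id" by blast
  next
    fix a x assume "a \<in> S" "x \<in> Iset n"
    then show "a x \<in> Iset n" using permutes_in_image[OF bspec[OF pm \<open>a \<in> S\<close>]] by simp
  next
    fix a x assume "a \<in> S" "x \<in> Iset n" "a x = x"
    then show "a = id" using assms(2) unfolding semiregular_def by blast
  qed
qed

theorem theorem11:
  fixes n :: nat and S :: "(nat \<Rightarrow> nat) set"
  assumes "n \<ge> 2" and "odd n"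
    and "subgroup S (sym_group (2*n))"
    and "S \<subseteq> Gstar n"
    and "semiregular n S"
  shows "\<exists>\<phi> \<in> Gstar n - Gfix n. group.ord (sym_group (2*n)) \<phi> = 2 \<and>
           (\<forall>s \<in> S. \<phi> \<circ> s = s \<circ> \<phi>)"
proof -
  have n1: "n \<ge> 1" using assms(1) by simp
  note F = WM_facts[OF n1]
  interpret S: sgrp S "Iset n" using subgroup_facts[OF assms(3,5)] by simp
  have pm: "\<forall>s\<in>S. s permutes Iset n" using subgroup_facts[OF assms(3,5)] by simp
  have dS: "(s ` Wset n = Wset n \<and> s ` Mset n = Mset n) \<or> (s ` Wset n = Mset n \<and> s ` Mset n = Wset n)"
    if "s \<in> S" for s using dich[of s n] assms(4) that by blast
  have IWM: "y \<in> Iset n \<longleftrightarrow> y \<in> Wset n \<or> y \<in> Mset n" for y using F(2) by blast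
  have notboth: "y \<in> Wset n \<Longrightarrow> y \<in> Mset n \<Longrightarrow> False" for y using F(1) by blast
  show ?thesis
  proof (cases "\<forall>s\<in>S. s ` Wset n = Wset n")
    case True
    have pres: "s ` Wset n = Wset n \<and> s ` Mset n = Mset n" if "s \<in> S" for s
      using dS[OF that] True that F(3) by auto
    have invW: "\<forall>x\<in>Wset n. orbit_of S x \<subseteq> Wset n"
      unfolding orbit_of_def using pres by blast
    have invM: "\<forall>x\<in>Mset n. orbit_of S x \<subseteq> Mset n"
      unfolding orbit_of_def using pres by blast
    define CW where "CW = orbit_of S ` Wset n"
    define CM where "CM = orbit_of S ` Mset n"
    have cW: "card S * card CW = n" unfolding CW_def using S.count[OF F(4) invW] F(6) by simp
    have cM: "card S * card CM = n" unfolding CM_def using S.count[OF F(5) invM] F(7) by simp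
    have cS: "card S \<noteq> 0" using S.finS S.idS by auto
    have "card S * card CW = card S * card CM" using cW cM by simp
    then have cc: "card CW = card CM" using cS by simp
    have fW: "finite (Wset n)" using F(4) S.finI finite_subset by blast
    have fM: "finite (Mset n)" using F(5) S.finI finite_subset by blast
    obtain \<beta> where bij: "bij_betw \<beta> CW CM"
      using finite_same_card_bij[of CW CM] cc fW fM unfolding CW_def CM_def by auto
    have bij': "bij_betw (inv_into CW \<beta>) CM CW" using bij_betw_inv_into[OF bij] .
    have pickW: "pick Q \<in> Wset n \<and> orbit_of S (pick Q) = Q \<and> S.rp (pick Q) = pick Q" if QC: "Q \<in> CW" for Q
    proof -
      obtain x where x: "x \<in> Wset n" "Q = orbit_of S x" using QC unfolding CW_def by blast
      have xI: "x \<in> Iset n" using x(1) F(4) by blast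
      have "pick Q \<in> Q" using S.pick_in[of Q] S.self_orb[of x] x(2) by blast
      then have a: "pick Q \<in> Wset n" "orbit_of S (pick Q) = Q"
        using invW x S.orb_eq[OF xI] by blast+
      moreover have "S.rp (pick Q) = pick Q" unfolding S.rp_def using a(2) by simp
      ultimately show ?thesis by simp
    qed
    have pickM: "pick Q \<in> Mset n \<and> orbit_of S (pick Q) = Q \<and> S.rp (pick Q) = pick Q" if QC: "Q \<in> CM" for Q
    proof -
      obtain x where x: "x \<in> Mset n" "Q = orbit_of S x" using QC unfolding CM_def by blast
      have xI: "x \<in> Iset n" using x(1) F(5) by blast
      have "pick Q \<in> Q" using S.pick_in[of Q] S.self_orb[of x] x(2) by blast
      then have a: "pick Q \<in> Mset n" "orbit_of S (pick Q) = Q"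
        using invM x S.orb_eq[OF xI] by blast+
      moreover have "S.rp (pick Q) = pick Q" unfolding S.rp_def using a(2) by simp
      ultimately show ?thesis by simp
    qed
    define g where "g r = (if r \<in> Wset n then pick (\<beta> (orbit_of S r))
                           else pick (inv_into CW \<beta> (orbit_of S r)))" for r
    have gW: "g r \<in> Mset n" if "r \<in> Wset n" for r
    proof -
      have "orbit_of S r \<in> CW" unfolding CW_def using that by blast
      then have "\<beta> (orbit_of S r) \<in> CM" using bij_betw_apply[OF bij] by blast
      then show ?thesis using pickM that unfolding g_def by simp
    qed
    have gM: "g r \<in> Wset n" if "r \<in> Mset n" for r
    proof -
      have "orbit_of S r \<in> CM" unfolding CM_def using that by blast
      then have "inv_into CW \<beta> (orbit_of S r) \<in> CW" using bij_betw_apply[OF bij'] by blast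
      moreover have "r \<notin> Wset n" using that notboth by blast
      ultimately show ?thesis using pickW unfolding g_def by simp
    qed
    have gI: "\<forall>y\<in>Iset n. g (S.rp y) \<in> Iset n"
    proof
      fix y assume y: "y \<in> Iset n"
      then have "S.rp y \<in> Wset n \<or> S.rp y \<in> Mset n" using S.rp_I[OF y] IWM by blast
      then show "g (S.rp y) \<in> Iset n" using gW gM F(4) F(5) by blast
    qed
    have gg: "\<forall>y\<in>Iset n. S.phi g (g (S.rp y)) = S.rp y"
    proof
      fix y assume y: "y \<in> Iset n"
      define r where "r = S.rp y"
      have rI: "r \<in> Iset n" unfolding r_def using S.rp_I[OF y] .
      have rr: "S.rp r = r" unfolding r_def using S.rp_rp[OF y] .
      have ro: "pick (orbit_of S r) = r" using rr unfolding S.rp_def .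
      show "S.phi g (g (S.rp y)) = S.rp y" unfolding r_def[symmetric]
      proof (cases "r \<in> Wset n")
        case True
        have oW: "orbit_of S r \<in> CW" unfolding CW_def using True by blast
        then have Q: "\<beta> (orbit_of S r) \<in> CM" using bij_betw_apply[OF bij] by blast
        define z where "z = g r"
        have z: "z = pick (\<beta> (orbit_of S r))" unfolding z_def g_def using True by simp
        have zM: "z \<in> Mset n" "orbit_of S z = \<beta> (orbit_of S r)" "S.rp z = z" using pickM[OF Q] z by auto
        have zI: "z \<in> Iset n" using zM(1) F(5) by blast
        have zW: "z \<notin> Wset n" using zM(1) notboth by blast
        have "S.phi g z = g z" using S.phi_rep[OF zI] zM(3) by simp
        also have "\<dots> = pick (inv_into CW \<beta> (\<beta> (orbit_of S r)))" unfolding g_def using zW zM(2) by simp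
        also have "\<dots> = pick (orbit_of S r)" using bij_betw_inv_into_left[OF bij oW] by simp
        also have "\<dots> = r" by (rule ro)
        finally show "S.phi g (g r) = r" unfolding z_def .
      next
        case False
        then have rM: "r \<in> Mset n" using rI IWM by blast
        have oM: "orbit_of S r \<in> CM" unfolding CM_def using rM by blast
        then have Q: "inv_into CW \<beta> (orbit_of S r) \<in> CW" using bij_betw_apply[OF bij'] by blast
        define z where "z = g r"
        have z: "z = pick (inv_into CW \<beta> (orbit_of S r))" unfolding z_def g_def using False by simp
        have zW: "z \<in> Wset n" "orbit_of S z = inv_into CW \<beta> (orbit_of S r)" "S.rp z = z" using pickW[OF Q] z by auto
        have zI: "z \<in> Iset n" using zW(1) F(4) by blast
        have "S.phi g z = g z" using S.phi_rep[OF zI] zW(3) by simp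
        also have "\<dots> = pick (\<beta> (inv_into CW \<beta> (orbit_of S r)))" unfolding g_def using zW(1) zW(2) by simp
        also have "\<dots> = pick (orbit_of S r)" using bij_betw_inv_into_right[OF bij oM] by simp
        also have "\<dots> = r" by (rule ro)
        finally show "S.phi g (g r) = r" unfolding z_def .
      qed
    qed
    have swap: "(y \<in> Wset n \<longrightarrow> S.phi g y \<in> Mset n) \<and> (y \<in> Mset n \<longrightarrow> S.phi g y \<in> Wset n)"
      if y: "y \<in> Iset n" for y
    proof -
      have sg: "S.sg y \<in> S" "S.sg y (S.rp y) = y" using S.sg[OF y] by auto
      have ps: "S.sg y ` Wset n = Wset n" "S.sg y ` Mset n = Mset n" using pres[OF sg(1)] by auto
      have ph: "S.phi g y = S.sg y (g (S.rp y))" unfolding S.phi_def using y by simp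
      have rWM: "S.rp y \<in> Wset n \<or> S.rp y \<in> Mset n" using S.rp_I[OF y] IWM by blast
      show ?thesis
      proof (intro conjI impI)
        assume yW: "y \<in> Wset n"
        have "S.rp y \<in> Wset n"
        proof (rule ccontr)
          assume "S.rp y \<notin> Wset n"
          then have "S.rp y \<in> Mset n" using rWM by blast
          then have "y \<in> Mset n" using ps(2) sg(2) by (metis imageI)
          then show False using yW notboth by blast
        qed
        then have "g (S.rp y) \<in> Mset n" by (rule gW)
        then show "S.phi g y \<in> Mset n" using ph ps(2) by (metis imageI)
      next
        assume yM: "y \<in> Mset n"
        have "S.rp y \<in> Mset n"
        proof (rule ccontr)
          assume "S.rp y \<notin> Mset n"
          then have "S.rp y \<in> Wset n" using rWM by blast
          then have "y \<in> Wset n" using ps(1) sg(2) by (metis imageI)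
          then show False using yM notboth by blast
        qed
        then have "g (S.rp y) \<in> Wset n" by (rule gM)
        then show "S.phi g y \<in> Wset n" using ph ps(1) by (metis imageI)
      qed
    qed
    show ?thesis
    proof (rule finish[OF n1])
      show "\<forall>y. y \<notin> Iset n \<longrightarrow> S.phi g y = y" unfolding S.phi_def by simp
      show "\<forall>y\<in>Iset n. S.phi g (S.phi g y) = y" using S.phi_invol[OF gI gg] by blast
      show "\<forall>y\<in>Wset n. S.phi g y \<in> Mset n" using swap F(4) by blast
      show "\<forall>y\<in>Mset n. S.phi g y \<in> Wset n" using swap F(5) by blast
      show "\<forall>s\<in>S. \<forall>y\<in>Iset n. S.phi g (s y) = s (S.phi g y)" using S.phi_comm by blast
      show "\<forall>s\<in>S. s permutes Iset n" by (rule pm)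
    qed

  next
    case False
    then obtain s0 where s0: "s0 \<in> S" "s0 ` Wset n \<noteq> Wset n" by blast
    have sw: "s ` Wset n = Mset n \<and> s ` Mset n = Wset n" if "s \<in> S" "s ` Wset n \<noteq> Wset n" for s
      using dS[OF that(1)] that(2) by blast
    have fx: "s ` Mset n = Mset n" if "s \<in> S" "s ` Wset n = Wset n" for s
      using dS[OF that(1)] that(2) F(3) by auto
    define H where "H = {s \<in> S. s ` Wset n = Wset n}"
    have HS: "H \<subseteq> S" unfolding H_def by blast
    interpret H: sgrp H "Wset n"
    proof
      show "finite H" using S.finS HS finite_subset by blast
      show "finite (Wset n)" using F(4) S.finI finite_subset by blast
      show "id \<in> H" unfolding H_def using S.idS by simp
      fix a b assume "a \<in> H" "b \<in> H"
      then have ab: "a \<in> S" "b \<in> S" "a ` Wset n = Wset n" "b ` Wset n = Wset n" unfolding H_def by auto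
      have "(a \<circ> b) ` Wset n = a ` (b ` Wset n)" by (rule image_comp[symmetric])
      then have "(a \<circ> b) ` Wset n = Wset n" using ab by simp
      then show "a \<circ> b \<in> H" unfolding H_def using S.compS[OF ab(1,2)] by simp
    next
      fix a assume aH: "a \<in> H"
      then have a: "a \<in> S" "a ` Wset n = Wset n" unfolding H_def by auto
      obtain b where b: "b \<in> S" "b \<circ> a = id" "a \<circ> b = id" using S.invS[OF a(1)] by blast
      have "b ` Wset n = Wset n"
      proof (rule ccontr)
        assume "b ` Wset n \<noteq> Wset n"
        then have "b ` Wset n = Mset n" using sw[OF b(1)] by blast
        moreover have "b ` (a ` Wset n) = Wset n" using b(2) by (simp add: image_comp)
        ultimately show False using a(2) F(3) by simp
      qed
      then show "\<exists>b\<in>H. b \<circ> a = id \<and> a \<circ> b = id" using b unfolding H_def by blast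
    next
      fix a x assume "a \<in> H" "x \<in> Wset n"
      then show "a x \<in> Wset n" unfolding H_def by blast
    next
      fix a x assume "a \<in> H" "x \<in> Wset n" "a x = x"
      then show "a = id" using S.semireg[of a x] HS F(4) by blast
    qed
    have "card H * card (orbit_of H ` Wset n) = card (Wset n)"
      using H.count[of "Wset n"] H.orb_sub by blast
    then have "card H * card (orbit_of H ` Wset n) = n" using F(6) by simp
    then have oddH: "odd (card H)" using assms(2) by (metis even_mult_iff)
    obtain b0 where b0: "b0 \<in> S" "b0 \<circ> s0 = id" "s0 \<circ> b0 = id" using S.invS[OF s0(1)] by blast
    have s0sw: "s0 ` Wset n = Mset n" "s0 ` Mset n = Wset n" using sw[OF s0] by auto
    have b0sw: "b0 ` Wset n = Mset n" "b0 ` Mset n = Wset n"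
    proof -
      have "b0 ` Wset n \<noteq> Wset n"
      proof
        assume "b0 ` Wset n = Wset n"
        then have "s0 ` (b0 ` Wset n) = Mset n" using s0sw by simp
        moreover have "s0 ` (b0 ` Wset n) = Wset n" using b0(3) by (simp add: image_comp)
        ultimately show False using F(3) by simp
      qed
      then show "b0 ` Wset n = Mset n" "b0 ` Mset n = Wset n" using sw[OF b0(1)] by auto
    qed
    have finS: "finite S" by (rule S.finS)
    have c1: "card H \<le> card (S - H)"
    proof (rule card_inj_on_le)
      show "inj_on (\<lambda>s. s0 \<circ> s) H"
      proof (rule inj_onI)
        fix a b assume "s0 \<circ> a = s0 \<circ> b"
        then have "b0 \<circ> (s0 \<circ> a) = b0 \<circ> (s0 \<circ> b)" by simp
        then show "a = b" using b0(2) by (simp add: comp_assoc[symmetric])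
      qed
      show "(\<lambda>s. s0 \<circ> s) ` H \<subseteq> S - H"
      proof
        fix x assume "x \<in> (\<lambda>s. s0 \<circ> s) ` H"
        then obtain s where s: "s \<in> H" "x = s0 \<circ> s" by blast
        have "x \<in> S" using s S.compS[OF s0(1)] HS by blast
        have "x ` Wset n = s0 ` (s ` Wset n)" using s(2) by (simp add: image_image)
        moreover have "s ` Wset n = Wset n" using s(1) unfolding H_def by simp
        ultimately have "x ` Wset n = Mset n" using s0sw by simp
        moreover note \<open>x \<in> S\<close>
        ultimately show "x \<in> S - H" unfolding H_def using F(3) by simp
      qed
      show "finite (S - H)" using finS by simp
    qed
    have c2: "card (S - H) \<le> card H"
    proof (rule card_inj_on_le)
      show "inj_on (\<lambda>s. b0 \<circ> s) (S - H)"
      proof (rule inj_onI)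
        fix a b assume "b0 \<circ> a = b0 \<circ> b"
        then have "s0 \<circ> (b0 \<circ> a) = s0 \<circ> (b0 \<circ> b)" by simp
        then show "a = b" using b0(3) by (simp add: comp_assoc[symmetric])
      qed
      show "(\<lambda>s. b0 \<circ> s) ` (S - H) \<subseteq> H"
      proof
        fix x assume "x \<in> (\<lambda>s. b0 \<circ> s) ` (S - H)"
        then obtain s where s: "s \<in> S" "s \<notin> H" "x = b0 \<circ> s" by blast
        have sW: "s ` Wset n = Mset n" using sw[OF s(1)] s(1,2) unfolding H_def by blast
        have "x \<in> S" using s S.compS[OF b0(1)] by blast
        have "x ` Wset n = b0 ` (s ` Wset n)" using s(3) by (simp add: image_image)
        then have "x ` Wset n = Wset n" using sW b0sw by simp
        moreover note \<open>x \<in> S\<close>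
        ultimately show "x \<in> H" unfolding H_def by simp
      qed
      show "finite H" using finS HS finite_subset by blast
    qed
    have oddSH: "odd (card (S - H))" using c1 c2 oddH by simp
    define iv where "iv a = (SOME b. b \<in> S \<and> b \<circ> a = id \<and> a \<circ> b = id)" for a
    have iv: "iv a \<in> S \<and> iv a \<circ> a = id \<and> a \<circ> iv a = id" if "a \<in> S" for a
      unfolding iv_def using someI_ex[OF S.invS[OF that, unfolded Bex_def]] .
    have ivSH: "iv a \<in> S - H" if a: "a \<in> S - H" for a
    proof -
      have i: "iv a \<in> S" "a \<circ> iv a = id" using iv[of a] a by auto
      have "iv a \<notin> H"
      proof
        assume "iv a \<in> H"
        then have "iv a ` Wset n = Wset n" unfolding H_def by simp
        then have "a ` (iv a ` Wset n) = a ` Wset n" by simp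
        moreover have "a ` (iv a ` Wset n) = Wset n" using i(2) by (simp add: image_comp)
        ultimately have "a ` Wset n = Wset n" by simp
        then show False using a unfolding H_def by simp
      qed
      then show ?thesis using i by simp
    qed
    have iviv: "iv (iv a) = a" if a: "a \<in> S" for a
    proof -
      have i1: "iv a \<in> S" "iv a \<circ> a = id" "a \<circ> iv a = id" using iv[OF a] by auto
      have i2: "iv (iv a) \<circ> iv a = id" using iv[OF i1(1)] by auto
      have "iv (iv a) = iv (iv a) \<circ> (iv a \<circ> a)" using i1(2) by simp
      also have "\<dots> = (iv (iv a) \<circ> iv a) \<circ> a" by (simp add: comp_assoc)
      also have "\<dots> = a" using i2 by simp
      finally show ?thesis .
    qed
    obtain t where t: "t \<in> S - H" "iv t = t"
      using invol_fix[of "S - H" iv] finS ivSH iviv oddSH by auto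
    have tS: "t \<in> S" using t by simp
    have tt: "t \<circ> t = id" using iv[OF tS] t(2) by simp
    have tsw: "t ` Wset n = Mset n" "t ` Mset n = Wset n" using sw[OF tS] t(1) unfolding H_def by auto
    define g where "g = t"
    have gI: "\<forall>y\<in>Iset n. g (S.rp y) \<in> Iset n" unfolding g_def using S.mapsI[OF tS] S.rp_I by blast
    have gg: "\<forall>y\<in>Iset n. S.phi g (g (S.rp y)) = S.rp y"
    proof
      fix y assume y: "y \<in> Iset n"
      have rI: "S.rp y \<in> Iset n" using S.rp_I[OF y] .
      have "S.phi g (g (S.rp y)) = t (S.phi g (S.rp y))" unfolding g_def using S.phi_comm[OF tS rI] by simp
      also have "\<dots> = t (t (S.rp y))" using S.phi_rep[OF y] unfolding g_def by simp
      also have "\<dots> = S.rp y" using fun_cong[OF tt, of "S.rp y"] by simp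
      finally show "S.phi g (g (S.rp y)) = S.rp y" .
    qed
    have swap: "(y \<in> Wset n \<longrightarrow> S.phi g y \<in> Mset n) \<and> (y \<in> Mset n \<longrightarrow> S.phi g y \<in> Wset n)"
      if y: "y \<in> Iset n" for y
    proof -
      have sg: "S.sg y \<in> S" "S.sg y (S.rp y) = y" using S.sg[OF y] by auto
      have ph: "S.phi g y = S.sg y (t (S.rp y))" unfolding S.phi_def g_def using y by simp
      have rWM: "S.rp y \<in> Wset n \<or> S.rp y \<in> Mset n" using S.rp_I[OF y] IWM by blast
      have ds: "(S.sg y ` Wset n = Wset n \<and> S.sg y ` Mset n = Mset n) \<or>
                (S.sg y ` Wset n = Mset n \<and> S.sg y ` Mset n = Wset n)" using dS[OF sg(1)] .
      have tW: "t x \<in> Mset n" if "x \<in> Wset n" for x using tsw(1) that by blast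
      have tM: "t x \<in> Wset n" if "x \<in> Mset n" for x using tsw(2) that by blast
      show ?thesis
      proof (intro conjI impI)
        assume yW: "y \<in> Wset n"
        show "S.phi g y \<in> Mset n"
          using ds
        proof
          assume d: "S.sg y ` Wset n = Wset n \<and> S.sg y ` Mset n = Mset n"
          have "S.rp y \<in> Wset n"
          proof (rule ccontr)
            assume "S.rp y \<notin> Wset n"
            then have "S.rp y \<in> Mset n" using rWM by blast
            then have "y \<in> Mset n" using d sg(2) by (metis imageI)
            then show False using yW notboth by blast
          qed
          then show ?thesis using ph d tW by (metis imageI)
        next
          assume d: "S.sg y ` Wset n = Mset n \<and> S.sg y ` Mset n = Wset n"
          have "S.rp y \<in> Mset n"
          proof (rule ccontr)
            assume "S.rp y \<notin> Mset n"
            then have "S.rp y \<in> Wset n" using rWM by blast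
            then have "y \<in> Mset n" using d sg(2) by (metis imageI)
            then show False using yW notboth by blast
          qed
          then show ?thesis using ph d tM by (metis imageI)
        qed
      next
        assume yM: "y \<in> Mset n"
        show "S.phi g y \<in> Wset n"
          using ds
        proof
          assume d: "S.sg y ` Wset n = Wset n \<and> S.sg y ` Mset n = Mset n"
          have "S.rp y \<in> Mset n"
          proof (rule ccontr)
            assume "S.rp y \<notin> Mset n"
            then have "S.rp y \<in> Wset n" using rWM by blast
            then have "y \<in> Wset n" using d sg(2) by (metis imageI)
            then show False using yM notboth by blast
          qed
          then show ?thesis using ph d tM by (metis imageI)
        next
          assume d: "S.sg y ` Wset n = Mset n \<and> S.sg y ` Mset n = Wset n"
          have "S.rp y \<in> Wset n"
          proof (rule ccontr)
            assume "S.rp y \<notin> Wset n"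
            then have "S.rp y \<in> Mset n" using rWM by blast
            then have "y \<in> Wset n" using d sg(2) by (metis imageI)
            then show False using yM notboth by blast
          qed
          then show ?thesis using ph d tW by (metis imageI)
        qed
      qed
    qed
    show ?thesis
    proof (rule finish[OF n1])
      show "\<forall>y. y \<notin> Iset n \<longrightarrow> S.phi g y = y" unfolding S.phi_def by simp
      show "\<forall>y\<in>Iset n. S.phi g (S.phi g y) = y" using S.phi_invol[OF gI gg] by blast
      show "\<forall>y\<in>Wset n. S.phi g y \<in> Mset n" using swap F(4) by blast
      show "\<forall>y\<in>Mset n. S.phi g y \<in> Wset n" using swap F(5) by blast
      show "\<forall>s\<in>S. \<forall>y\<in>Iset n. S.phi g (s y) = s (S.phi g y)" using S.phi_comm by blast
      show "\<forall>s\<in>S. s permutes Iset n" by (rule pm)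
    qed

  qed
qed

end
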